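(* Let $\Omega$ be a circle domain with $\infty\in\Omega$, let $\{\gamma_j\}$ be its boundary circles, $B_j$ the open disk bounded by $\gamma_j$ with $B_j\cap\Omega=\emptyset$, and $R_j$ the reflection across $\gamma_j$. For $k\ge0$ let $\Omega_k=\bigcup_{l(T)\le k}T(\Omega)$, the union over $T\in\Gamma(\Omega)$ of length at most $k$. Then for each $k\ge0$: $$\overline{\Omega_k}=\bigcup_{l(T)\le k}T(\overline\Omega),\qquad \partial\Omega_k=\bigcup_{l(T)\le k}T(\partial\Omega),$$ $$\widehat{\mathbb C}\setminus\overline{\Omega_k}=\bigcup R_{i_1}\circ\dots\circ R_{i_k}(B_{i_{k+1}}),$$ where the last union is over all sequences $i_1,\dots,i_{k+1}$ with $i_j\ne i_{j+1}$ (for $k=0$ it is $\bigcup_jB_j$), and the sets in this union are pairwise disjoint for distinct such sequences. Moreover, for each sequence $i_1,\dots,i_{k+2}$ with consecutive indices distinct, the closure of $R_{i_1}\circ\dots\circ R_{i_{k+1}}(B_{i_{k+2}})$ is contained in $R_{i_1}\circ\dots\circ R_{i_k}(B_{i_{k+1}})$ (for $k=0$: $\overline{R_{i_1}(B_{i_2})}\subset B_{i_1}$).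
   Context: A circle domain is a domain in $\widehat{\mathbb C}$ each boundary component of which is a geometric circle or a point. The Schottky group $\Gamma(\Omega)$ is the group of Möbius and anti-Möbius maps generated by the reflections $R_j$. Every $T\in\Gamma(\Omega)$, $T\ne\mathrm{id}$, can be written uniquely in reduced form $T=R_{i_1}\circ\dots\circ R_{i_k}$ with $i_j\ne i_{j+1}$; its length is $l(T)=k$, and $l(\mathrm{id})=0$. *)

theory Defs
  imports "HOL-Analysis.Analysis"
begin

text \<open>The Riemann sphere is modelled as complex option, None being the point at infinity.
  Its topology is the pullback of the Euclidean topology of R^3 under the inverse
  stereographic projection (an injective map onto the unit sphere).\<close>

type_synonym riemann = "complex option"

definition stereo :: "riemann \<Rightarrow> real \<times> real \<times> real" where
  "stereo p = (case p of
      None \<Rightarrow> (0, 0, 1)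
    | Some z \<Rightarrow> (2 * Re z / (1 + (cmod z)^2), 2 * Im z / (1 + (cmod z)^2),
                 ((cmod z)^2 - 1) / ((cmod z)^2 + 1)))"

definition sphtop :: "riemann topology" where
  "sphtop = pullback_topology UNIV stereo euclidean"

definition geom_circle :: "riemann set \<Rightarrow> bool" where
  "geom_circle C \<longleftrightarrow>
     (\<exists>c r. r > 0 \<and> C = Some ` sphere c r) \<or>
     (\<exists>a b. b \<noteq> 0 \<and> C = insert None (Some ` {a + of_real t * b | t. True}))"

definition boundary_components :: "riemann set \<Rightarrow> riemann set set" where
  "boundary_components \<Omega> = connected_components_of (subtopology sphtop (sphtop frontier_of \<Omega>))"

definition circle_domain :: "riemann set \<Rightarrow> bool" where
  "circle_domain \<Omega> \<longleftrightarrow> openin sphtop \<Omega> \<and> connectedin sphtop \<Omega> \<and> \<Omega> \<noteq> {} \<and>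
     (\<forall>K \<in> boundary_components \<Omega>. geom_circle K \<or> (\<exists>p. K = {p}))"

text \<open>Boundary circles (Euclidean, since infinity lies in the domain) are indexed by
  (center, radius).\<close>
definition circ_index :: "riemann set \<Rightarrow> (complex \<times> real) set" where
  "circ_index \<Omega> = {(c, r). r > 0 \<and> Some ` sphere c r \<in> boundary_components \<Omega>}"

definition disk :: "complex \<times> real \<Rightarrow> riemann set" where
  "disk i = Some ` ball (fst i) (snd i)"

definition refl :: "complex \<times> real \<Rightarrow> riemann \<Rightarrow> riemann" where
  "refl i p = (case p of
      None \<Rightarrow> Some (fst i)
    | Some z \<Rightarrow> (if z = fst i then None
                 else Some (fst i + complex_of_real ((snd i)^2) / cnj (z - fst i))))"

definition word_map :: "(complex \<times> real) list \<Rightarrow> riemann \<Rightarrow> riemann" where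
  "word_map ws = foldr (\<lambda>i f. refl i \<circ> f) ws id"

definition reduced_word :: "(complex \<times> real) set \<Rightarrow> (complex \<times> real) list \<Rightarrow> bool" where
  "reduced_word J ws \<longleftrightarrow> set ws \<subseteq> J \<and> successively (\<noteq>) ws"

definition Omega_k :: "riemann set \<Rightarrow> nat \<Rightarrow> riemann set" where
  "Omega_k \<Omega> k = \<Union>{word_map ws ` \<Omega> | ws. reduced_word (circ_index \<Omega>) ws \<and> length ws \<le> k}"

end

theory Submission
  imports Defs
begin


lemma stereo_aux: fixes a b m :: real assumes m: "m = a^2 + b^2"
  shows "(\<bar>2 * a\<bar> / (1 + m))^2 + ((\<bar>2 * b\<bar> / (1 + m))^2 + (1 - (m - 1) / (m + 1))^2) = 4 / (1 + m)"
proof -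
  have p: "1 + m > 0" "m + 1 > 0" using m by (smt (verit) zero_le_power2)+
  have e: "1 - (m - 1) / (m + 1) = 2/(1+m)" using p by (simp add: field_simps)
  have "(\<bar>2 * a\<bar> / (1 + m))^2 + ((\<bar>2 * b\<bar> / (1 + m))^2 + (1 - (m - 1) / (m + 1))^2)
     = (4 * (a^2+b^2+1))/(1+m)^2" unfolding e by (simp add: power_divide power2_abs algebra_simps add_divide_distrib power_mult_distrib)
  also have "\<dots> = (4 * (1+m))/(1+m)^2" by (simp add: m algebra_simps)
  also have "\<dots> = 4/(1+m)" using p by (simp add: power2_eq_square divide_simps)
  finally show ?thesis .
qed

lemma stereo_dist_N:
  "dist (stereo (Some z)) (0,0,1) = sqrt (4 / (1 + (cmod z)^2))"
proof -
  have m: "(cmod z)^2 = (Re z)^2 + (Im z)^2" by (simp add: cmod_power2)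
  show ?thesis using stereo_aux[OF m]
    by (simp add: stereo_def dist_Pair_Pair dist_real_def power2_abs abs_minus_commute)
qed

lemma stereo_Some_cont: "continuous_on UNIV (\<lambda>z. stereo (Some z))"
proof -
  have p: "\<And>z. 1 + (cmod z)^2 \<noteq> 0" "\<And>z. (cmod z)^2 + 1 \<noteq> 0" by (smt (verit) zero_le_power2)+
  show ?thesis unfolding stereo_def using p
    by (auto intro!: continuous_intros)
qed

lemma stereo_None: "stereo None = (0,0,1)" by (simp add: stereo_def)

lemma topspace_sphtop[simp]: "topspace sphtop = UNIV"
  by (simp add: sphtop_def topspace_pullback_topology)

lemma stereo_inv: "(\<lambda>p. Complex (fst p) (fst (snd p)) / complex_of_real (1 - snd (snd p))) (stereo (Some z)) = z"
  and stereo_lt1: "snd (snd (stereo (Some z))) < 1"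
proof -
  have p: "1 + (cmod z)^2 > 0" "(cmod z)^2 + 1 > 0" by (smt (verit) zero_le_power2)+
  have e: "1 - ((cmod z)^2 - 1) / ((cmod z)^2 + 1) = 2/(1+(cmod z)^2)" using p by (simp add: field_simps)
  show "snd (snd (stereo (Some z))) < 1" using p by (simp add: stereo_def)
  have "Complex (2 * Re z / (1 + (cmod z)^2)) (2 * Im z / (1 + (cmod z)^2)) =
        complex_of_real (2/(1+(cmod z)^2)) * z"
    by (simp add: complex_eq_iff)
  moreover have nz: "complex_of_real (2/(1+(cmod z)^2)) \<noteq> 0" using p by (simp only: of_real_eq_0_iff) simp
  ultimately show "(\<lambda>p. Complex (fst p) (fst (snd p)) / complex_of_real (1 - snd (snd p))) (stereo (Some z)) = z"
    by (simp only: stereo_def option.case fst_conv snd_conv e) (rule nonzero_mult_div_cancel_left[OF nz])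
qed

lemma openin_sphtop: "openin sphtop U \<longleftrightarrow>
   open {z. Some z \<in> U} \<and> (None \<in> U \<longrightarrow> (\<exists>R. \<forall>z. R < cmod z \<longrightarrow> Some z \<in> U))"
proof
  assume "openin sphtop U"
  then obtain V where V: "open V" "U = stereo -` V"
    by (auto simp: sphtop_def openin_pullback_topology)
  have "{z. Some z \<in> U} = (\<lambda>z. stereo (Some z)) -` V" using V by auto
  then have o: "open {z. Some z \<in> U}"
    using open_vimage[OF V(1) stereo_Some_cont] by simp
  have "\<exists>R. \<forall>z. R < cmod z \<longrightarrow> Some z \<in> U" if "None \<in> U"
  proof -
    have "(0,0,1) \<in> V" using that V by (simp add: stereo_None)
    then obtain e where e: "e > 0" "ball (0,0,1) e \<subseteq> V" using V(1) open_contains_ball by blast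
    have "Some z \<in> U" if "2/e < cmod z" for z
    proof -
      have "2 < e * cmod z" using that e by (simp add: field_simps)
      then have "2^2 < (e * cmod z)^2" by (intro power_strict_mono) auto
      then have "4 < (e * cmod z)^2" by simp
      then have h4: "4 < e^2 * (cmod z)^2" by (simp add: power_mult_distrib)
      have "e^2 * (1 + (cmod z)^2) = e^2 + e^2 * (cmod z)^2" by (simp add: distrib_left)
      moreover have "0 \<le> e^2" by simp
      ultimately have "4 < e^2 * (1 + (cmod z)^2)" using h4 by linarith
      moreover have "0 < 1 + (cmod z)^2" by (smt (verit) zero_le_power2)
      ultimately have "4 / (1 + (cmod z)^2) < e^2" by (simp add: divide_less_eq)
      then have "sqrt (4 / (1 + (cmod z)^2)) < sqrt (e^2)" by (rule real_sqrt_less_mono)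
      then have "sqrt (4 / (1 + (cmod z)^2)) < e" using e by simp
      then have "stereo (Some z) \<in> ball (0,0,1) e" by (simp add: stereo_dist_N dist_commute)
      then show ?thesis using e V by auto
    qed
    then show ?thesis by blast
  qed
  then show "open {z. Some z \<in> U} \<and> (None \<in> U \<longrightarrow> (\<exists>R. \<forall>z. R < cmod z \<longrightarrow> Some z \<in> U))"
    using o by blast
next
  assume A: "open {z. Some z \<in> U} \<and> (None \<in> U \<longrightarrow> (\<exists>R. \<forall>z. R < cmod z \<longrightarrow> Some z \<in> U))"
  define W where "W = {z. Some z \<in> U}"
  define g where "g = (\<lambda>p::real\<times>real\<times>real. Complex (fst p) (fst (snd p)) / complex_of_real (1 - snd (snd p)))"
  define S where "S = {p::real\<times>real\<times>real. snd (snd p) < 1}"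
  have oS: "open S" unfolding S_def by (intro open_Collect_less continuous_intros)
  have cg: "continuous_on S g" unfolding g_def S_def
    by (intro continuous_intros) (auto simp: Complex_eq)
  define V0 where "V0 = S \<inter> g -` W"
  have oV0: "open V0" unfolding V0_def W_def using A oS cg continuous_open_preimage by blast
  obtain R where R: "None \<in> U \<Longrightarrow> \<forall>z. R < cmod z \<longrightarrow> Some z \<in> U" using A by blast
  define R' where "R' = max R 0"
  define e where "e = sqrt (4 / (1 + R'^2))"
  define V where "V = V0 \<union> (if None \<in> U then ball (0,0,1) e else {})"
  have oV: "open V" unfolding V_def using oV0 by auto
  have "U = stereo -` V"
  proof (rule set_eqI)
    fix p show "p \<in> U \<longleftrightarrow> p \<in> stereo -` V"
    proof (cases p)
      case None
      have "0 < 1 + R'^2" by (smt (verit) zero_le_power2)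
      then show ?thesis using None by (auto simp: V_def V0_def S_def stereo_None e_def)
    next
      case (Some z)
      have inV0: "stereo (Some z) \<in> V0 \<longleftrightarrow> Some z \<in> U"
        using stereo_inv[of z] stereo_lt1[of z] by (auto simp: V0_def S_def W_def g_def)
      have "Some z \<in> U" if "None \<in> U" "stereo (Some z) \<in> ball (0,0,1) e"
      proof -
        have "sqrt (4 / (1 + (cmod z)^2)) < sqrt (4 / (1 + R'^2))"
          using that(2) by (simp add: stereo_dist_N dist_commute e_def)
        then have "4 / (1 + (cmod z)^2) < 4 / (1 + R'^2)" by simp
        moreover have "0 < 1 + (cmod z)^2" "0 < 1 + R'^2" by (smt (verit) zero_le_power2)+
        ultimately have "1 + R'^2 < 1 + (cmod z)^2" by (simp add: divide_less_eq field_simps)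
        then have "R'^2 < (cmod z)^2" by simp
        then have "R' < cmod z" unfolding R'_def using power_less_imp_less_base by fastforce
        then show ?thesis using R that(1) unfolding R'_def by auto
      qed
      then show ?thesis using Some inV0 by (auto simp: V_def)
    qed
  qed
  then show "openin sphtop U" unfolding sphtop_def openin_pullback_topology using oV by auto
qed



lemma refl_Some: "refl (c,r) (Some z) = (if z = c then None else Some (c + complex_of_real (r^2) / cnj (z - c)))"
  by (simp add: refl_def)
lemma refl_None: "refl (c,r) None = Some c"
  by (simp add: refl_def)

lemma norm_inv_term: "cmod (complex_of_real (r^2) / cnj (w - c)) = r^2 / cmod (w - c)"
proof -
  have "cmod (complex_of_real (r^2) / cnj (w-c)) = cmod (complex_of_real (r^2)) / cmod (cnj (w - c))"
    by (rule norm_divide)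
  also have "\<dots> = r^2 / cmod (w-c)" by (simp only: complex_mod_cnj norm_of_real) simp
  finally show ?thesis .
qed

lemma refl_open:
  assumes r: "r > 0" and U: "openin sphtop U"
  shows "openin sphtop {p. refl (c,r) p \<in> U}"
proof -
  define W where "W = {z. Some z \<in> U}"
  have oW: "open W" and RU: "None \<in> U \<Longrightarrow> \<exists>R. \<forall>z. R < cmod z \<longrightarrow> Some z \<in> U"
    using U unfolding openin_sphtop W_def by auto
  define h where "h = (\<lambda>w. c + complex_of_real (r^2) / cnj (w - c))"
  define A where "A = {z. refl (c,r) (Some z) \<in> U}"
  define A1 where "A1 = (- {c}) \<inter> h -` W"
  have oA1: "open A1" unfolding A1_def h_def
    by (rule continuous_open_preimage[OF _ _ oW]) (auto intro!: continuous_intros)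
  have nbhd: "\<exists>e>0. ball c e \<subseteq> A" if N: "None \<in> U"
  proof -
    obtain R where R: "\<forall>z. R < cmod z \<longrightarrow> Some z \<in> U" using RU N by blast
    define R2 where "R2 = max R 0 + cmod c + 1"
    have R2: "R2 > 0" unfolding R2_def by (smt (verit) norm_ge_zero)
    define e where "e = r^2 / R2"
    have e: "e > 0" unfolding e_def using r R2 by simp
    have "w \<in> A" if w: "w \<in> ball c e" for w
    proof (cases "w = c")
      case True then show ?thesis using N by (simp add: A_def refl_Some)
    next
      case False
      have d: "0 < cmod (w - c)" "cmod (w - c) < e" using False w by (auto simp: dist_norm norm_minus_commute)
      then have "cmod (w - c) * R2 < r^2" unfolding e_def using R2 by (simp add: field_simps)
      then have "R2 < r^2 / cmod (w - c)" using d by (simp add: field_simps)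
      then have q: "R2 < cmod (complex_of_real (r^2) / cnj (w - c))" unfolding norm_inv_term .
      have "cmod (complex_of_real (r^2) / cnj (w - c)) \<le> cmod (c + complex_of_real (r^2) / cnj (w - c)) + cmod c"
        by (metis add_diff_cancel_left' norm_triangle_ineq4 add.commute)
      then have "R < cmod (c + complex_of_real (r^2) / cnj (w - c))" using q unfolding R2_def by linarith
      then show ?thesis using R False by (simp add: A_def refl_Some)
    qed
    then show ?thesis using e by blast
  qed
  have oA: "open A"
  proof (cases "None \<in> U")
    case True
    then obtain e where e: "e > 0" "ball c e \<subseteq> A" using nbhd by blast
    have "A = A1 \<union> ball c e"
      using e by (auto simp: A_def A1_def h_def W_def refl_Some split: if_splits)
    then show ?thesis using oA1 by auto
  next
    case False
    have "A = A1" using False by (auto simp: A_def A1_def h_def W_def refl_Some split: if_splits)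
    then show ?thesis using oA1 by simp
  qed
  have inf: "\<exists>R. \<forall>z. R < cmod z \<longrightarrow> Some z \<in> {p. refl (c,r) p \<in> U}"
    if N: "None \<in> {p. refl (c,r) p \<in> U}"
  proof -
    have "c \<in> W" using N by (simp add: W_def refl_None)
    then obtain d where d: "d > 0" "ball c d \<subseteq> W" using oW open_contains_ball by blast
    have "Some z \<in> {p. refl (c,r) p \<in> U}" if z: "cmod c + r^2/d < cmod z" for z
    proof -
      have "cmod z \<le> cmod (z - c) + cmod c" by (metis norm_triangle_ineq2 add.commute diff_le_eq)
      then have zc: "r^2/d < cmod (z - c)" using z by linarith
      have pos: "0 < r^2/d" using r d by simp
      then have ne: "z \<noteq> c" using zc by auto
      have "r^2 < d * cmod (z - c)" using zc d by (simp add: field_simps)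
      moreover have "0 < cmod (z - c)" using zc pos by linarith
      ultimately have "r^2 / cmod (z - c) < d" by (simp add: divide_less_eq mult.commute)
      then have "cmod (complex_of_real (r^2) / cnj (z - c)) < d" unfolding norm_inv_term .
      then have "h z \<in> ball c d" by (simp add: h_def dist_norm)
      then show ?thesis using d ne by (auto simp: refl_Some h_def W_def)
    qed
    then show ?thesis by blast
  qed
  have "{z. Some z \<in> {p. refl (c,r) p \<in> U}} = A" by (simp add: A_def)
  then show ?thesis unfolding openin_sphtop using oA inf by simp
qed

lemma refl_invol: assumes "r > 0" shows "refl (c,r) (refl (c,r) p) = p"
proof (cases p)
  case None then show ?thesis using assms by (simp add: refl_None refl_Some)
next
  case (Some z)
  show ?thesis
  proof (cases "z = c")
    case True then show ?thesis using Some by (simp add: refl_None refl_Some)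
  next
    case False
    have nz: "complex_of_real (r^2) / cnj (z - c) \<noteq> 0" using False assms by simp
    have "complex_of_real (r^2) / cnj (complex_of_real (r^2) / cnj (z - c)) = z - c"
      using False assms by (simp add: field_simps)
    then show ?thesis using Some False nz by (simp add: refl_Some)
  qed
qed

lemma refl_cont: assumes "r > 0" shows "continuous_map sphtop sphtop (refl (c,r))"
  unfolding continuous_map_def using refl_open[OF assms] by (simp add: Collect_mem_eq)

lemma refl_homeo: assumes "r > 0" shows "homeomorphic_map sphtop sphtop (refl (c,r))"
proof -
  have "homeomorphic_maps sphtop sphtop (refl (c,r)) (refl (c,r))"
    unfolding homeomorphic_maps_def using refl_cont[OF assms] refl_invol[OF assms] by auto
  then show ?thesis using homeomorphic_map_maps by blast
qed



definition cdisk :: "complex \<times> real \<Rightarrow> riemann set" where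
  "cdisk i = Some ` cball (fst i) (snd i)"

lemma Some_in_disk[simp]: "Some z \<in> disk i \<longleftrightarrow> z \<in> ball (fst i) (snd i)"
  by (auto simp: disk_def)
lemma None_notin_disk[simp]: "None \<notin> disk i"
  by (auto simp: disk_def)
lemma Some_in_cdisk[simp]: "Some z \<in> cdisk i \<longleftrightarrow> z \<in> cball (fst i) (snd i)"
  by (auto simp: cdisk_def)
lemma None_notin_cdisk[simp]: "None \<notin> cdisk i"
  by (auto simp: cdisk_def)

lemma disk_open: "openin sphtop (disk i)"
proof -
  have "{z. Some z \<in> disk i} = ball (fst i) (snd i)" by auto
  then show ?thesis unfolding openin_sphtop by simp
qed

lemma dist_add_self: "dist c (c + q) = cmod (q::complex)"
  by (simp add: dist_norm)

lemma cdisk_closed: "closedin sphtop (cdisk i)"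
proof -
  have "{z. Some z \<in> - cdisk i} = - cball (fst i) (snd i)" by auto
  moreover have "Some z \<in> - cdisk i" if "cmod (fst i) + snd i < cmod z" for z
  proof -
    have "cmod z \<le> cmod (fst i) + dist (fst i) z" by (metis dist_norm norm_minus_commute norm_triangle_ineq2 add.commute diff_le_eq)
    then show ?thesis using that by auto
  qed
  ultimately have "openin sphtop (- cdisk i)" unfolding openin_sphtop by auto
  then show ?thesis by (simp add: closedin_def Compl_eq_Diff_UNIV)
qed

lemma refl_disk_iff:
  assumes r: "r > 0" shows "p \<in> disk (c,r) \<longleftrightarrow> refl (c,r) p \<notin> cdisk (c,r)"
proof (cases p)
  case None then show ?thesis using r by (simp add: refl_None)
next
  case (Some z)
  show ?thesis
  proof (cases "z = c")
    case True then show ?thesis using Some r by (simp add: refl_Some)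
  next
    case False
    have d: "0 < cmod (z - c)" using False by simp
    have "dist c (c + complex_of_real (r^2) / cnj (z - c)) = r^2 / cmod (z - c)"
      unfolding dist_add_self norm_inv_term ..
    moreover have "dist c z = cmod (z - c)" by (simp add: dist_norm norm_minus_commute)
    moreover have "r^2 / cmod (z - c) \<le> r \<longleftrightarrow> r * r \<le> r * cmod (z - c)"
      using d by (simp add: divide_le_eq power2_eq_square mult.commute)
    moreover have "r * r \<le> r * cmod (z - c) \<longleftrightarrow> r \<le> cmod (z - c)"
      using r by (rule mult_le_cancel_left_pos)
    ultimately show ?thesis using Some False by (simp add: refl_Some not_le)
  qed
qed

lemma Some_cont: "continuous_map euclidean sphtop Some"
  unfolding continuous_map_def using openin_sphtop by auto

lemma closure_Some: "Some z \<in> sphtop closure_of A \<longleftrightarrow> z \<in> closure {w. Some w \<in> A}"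
proof
  assume a: "Some z \<in> sphtop closure_of A"
  show "z \<in> closure {w. Some w \<in> A}"
    unfolding closure_approachable
  proof (intro allI impI)
    fix e :: real assume "e > 0"
    have "{w. Some w \<in> Some ` ball z e} = ball z e" by auto
    then have "openin sphtop (Some ` ball z e)" unfolding openin_sphtop by simp
    moreover have "Some z \<in> Some ` ball z e" using `e > 0` by simp
    ultimately obtain y where "y \<in> A" "y \<in> Some ` ball z e" using a unfolding in_closure_of by blast
    then show "\<exists>x'\<in>{w. Some w \<in> A}. dist x' z < e" by (auto simp: dist_commute)
  qed
next
  assume a: "z \<in> closure {w. Some w \<in> A}"
  show "Some z \<in> sphtop closure_of A"
    unfolding in_closure_of
  proof (intro conjI allI impI)
    fix T assume T: "Some z \<in> T \<and> openin sphtop T"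
    then have "open {w. Some w \<in> T}" "z \<in> {w. Some w \<in> T}" unfolding openin_sphtop by auto
    then obtain e where e: "e > 0" "ball z e \<subseteq> {w. Some w \<in> T}" using open_contains_ball by blast
    then obtain w where "Some w \<in> A" "dist w z < e" using a unfolding closure_approachable by auto
    then have "w \<in> ball z e" by (simp add: dist_commute)
    then show "\<exists>y. y \<in> A \<and> y \<in> T" using e `Some w \<in> A` by blast
  qed simp
qed



lemma circ_dir:
  fixes c c' :: complex
  obtains u where "cmod u = 1" "c - c' = complex_of_real (cmod (c - c')) * u"
proof (cases "c = c'")
  case True then show ?thesis using that[of 1] by simp
next
  case False
  then show ?thesis using that[of "(c - c') / complex_of_real (cmod (c - c'))"]
    by (simp add: norm_divide)
qed

lemma circ_points:
  fixes c c' :: complex and r' :: real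
  assumes r': "r' \<ge> 0"
  shows "\<exists>w \<in> sphere c' r'. dist c w = \<bar>cmod (c - c') - r'\<bar>"
    and "\<exists>w \<in> sphere c' r'. dist c w = cmod (c - c') + r'"
proof -
  obtain u where u: "cmod u = 1" "c - c' = complex_of_real (cmod (c - c')) * u" by (rule circ_dir)
  define d where "d = cmod (c - c')"
  have d0: "d \<ge> 0" unfolding d_def by simp
  have e1: "c' + complex_of_real r' * u - c = complex_of_real (r' - d) * u"
    using u(2) unfolding d_def by (simp add: algebra_simps)
  have "dist c (c' + complex_of_real r' * u) = cmod (c' + complex_of_real r' * u - c)"
    by (simp add: dist_norm norm_minus_commute)
  also have "\<dots> = cmod (complex_of_real (r' - d) * u)" unfolding e1 ..
  also have "\<dots> = \<bar>d - r'\<bar>" by (simp only: norm_mult norm_of_real u(1)) simp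
  finally have "dist c (c' + complex_of_real r' * u) = \<bar>d - r'\<bar>" .
  moreover have "c' + complex_of_real r' * u \<in> sphere c' r'" using u(1) r' by (simp add: dist_norm norm_mult)
  ultimately show "\<exists>w \<in> sphere c' r'. dist c w = \<bar>cmod (c - c') - r'\<bar>" unfolding d_def by blast
  have e2: "c' - complex_of_real r' * u - c = - complex_of_real (r' + d) * u"
    using u(2) unfolding d_def by (simp add: algebra_simps)
  have "dist c (c' - complex_of_real r' * u) = cmod (c' - complex_of_real r' * u - c)"
    by (simp add: dist_norm norm_minus_commute)
  also have "\<dots> = cmod (- complex_of_real (r' + d) * u)" unfolding e2 ..
  also have "\<dots> = d + r'" using r' d0 by (simp only: norm_mult norm_minus_cancel norm_of_real u(1)) simp
  finally have "dist c (c' - complex_of_real r' * u) = d + r'" .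
  moreover have "c' - complex_of_real r' * u \<in> sphere c' r'" using u(1) r' by (simp add: dist_norm norm_mult)
  ultimately show "\<exists>w \<in> sphere c' r'. dist c w = cmod (c - c') + r'" unfolding d_def by blast
qed

lemma circ_sep:
  fixes c c' :: complex
  assumes r: "r > 0" "r' > 0" and b1: "sphere c' r' \<inter> ball c r = {}" and b2: "sphere c r \<inter> ball c' r' = {}"
  shows "sphere c r \<inter> sphere c' r' = {} \<Longrightarrow> cball c r \<inter> cball c' r' = {}"
    and "sphere c r = sphere c' r' \<Longrightarrow> c = c' \<and> r = r'"
proof -
  define d where "d = cmod (c - c')"
  have dd: "cmod (c' - c) = d" unfolding d_def by (simp add: norm_minus_commute)
  obtain w where w: "w \<in> sphere c' r'" "dist c w = \<bar>d - r'\<bar>" using circ_points(1)[of r' c' c, OF less_imp_le[OF r(2)], folded d_def] by blast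
  obtain w2 where w2: "w2 \<in> sphere c' r'" "dist c w2 = d + r'" using circ_points(2)[of r' c' c, OF less_imp_le[OF r(2)], folded d_def] by blast
  obtain v where v: "v \<in> sphere c r" "dist c' v = \<bar>d - r\<bar>" using circ_points(1)[of r c c', OF less_imp_le[OF r(1)], unfolded dd] by blast
  have wr: "\<bar>d - r'\<bar> \<ge> r" using w b1 by (auto simp: not_less)
  have vr: "\<bar>d - r\<bar> \<ge> r'" using v b2 by (auto simp: not_less)
  show "cball c r \<inter> cball c' r' = {}" if dj: "sphere c r \<inter> sphere c' r' = {}"
  proof -
    have "\<bar>d - r'\<bar> \<noteq> r" using w dj by auto
    moreover have "\<bar>d - r\<bar> \<noteq> r'" using v dj by auto
    moreover have "d \<ge> 0" unfolding d_def by simp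
    ultimately have "d > r + r'" using wr vr r by (smt (verit))
    moreover have "d \<le> r + r'" if "x \<in> cball c r" "x \<in> cball c' r'" for x
    proof -
      have "d \<le> dist c x + dist x c'" unfolding d_def by (metis dist_norm dist_triangle)
      then show ?thesis using that by (simp add: dist_commute)
    qed
    ultimately show ?thesis by force
  qed
  show "c = c' \<and> r = r'" if eq: "sphere c r = sphere c' r'"
  proof -
    have "w \<in> sphere c r" using w(1) eq by simp
    then have "\<bar>d - r'\<bar> = r" using w(2) by simp
    moreover have "w2 \<in> sphere c r" using w2(1) eq by simp
    then have "d + r' = r" using w2(2) by simp
    moreover have "d \<ge> 0" unfolding d_def by simp
    ultimately have "d = 0" "r = r'" using r by linarith+
    then show ?thesis unfolding d_def by simp
  qed
qed



lemma cdisk_split: "cdisk i = disk i \<union> Some ` sphere (fst i) (snd i)"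
proof -
  have "cball (fst i) (snd i) = ball (fst i) (snd i) \<union> sphere (fst i) (snd i)" by (auto simp: less_le)
  then show ?thesis by (simp add: cdisk_def disk_def image_Un)
qed

lemma cdisk_open_compl: "openin sphtop (UNIV - cdisk i)"
  using cdisk_closed[of i] by (simp add: closedin_def)

context
  fixes \<Omega> :: "riemann set"
  assumes cd: "circle_domain \<Omega>" and inf: "None \<in> \<Omega>"
begin

lemma Om_open: "openin sphtop \<Omega>" using cd by (simp add: circle_domain_def)
lemma Om_conn: "connectedin sphtop \<Omega>" using cd by (simp add: circle_domain_def)

lemma J_pos: "i \<in> circ_index \<Omega> \<Longrightarrow> snd i > 0"
  by (auto simp: circ_index_def)

lemma J_comp: "i \<in> circ_index \<Omega> \<Longrightarrow> Some ` sphere (fst i) (snd i) \<in> boundary_components \<Omega>"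
  by (auto simp: circ_index_def)

lemma comp_front: "K \<in> boundary_components \<Omega> \<Longrightarrow> K \<subseteq> sphtop frontier_of \<Omega>"
  unfolding boundary_components_def using connected_components_of_subset by fastforce

lemma J_front: "i \<in> circ_index \<Omega> \<Longrightarrow> Some ` sphere (fst i) (snd i) \<subseteq> sphtop frontier_of \<Omega>"
  using J_comp comp_front by blast

lemma front_Om: "\<Omega> \<inter> sphtop frontier_of \<Omega> = {}"
  using Om_open by (auto simp: frontier_of_def interior_of_openin)

lemma front_cl: "sphtop frontier_of \<Omega> \<subseteq> sphtop closure_of \<Omega>"
  by (auto simp: frontier_of_def)

lemma Om_disk: assumes i: "i \<in> circ_index \<Omega>" shows "\<Omega> \<inter> disk i = {}"
proof -
  have s: "\<Omega> \<inter> Some ` sphere (fst i) (snd i) = {}" using J_front[OF i] front_Om by blast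
  have sub: "\<Omega> \<subseteq> disk i \<union> (UNIV - cdisk i)" using s cdisk_split[of i] by blast
  have dj: "disk i \<inter> (UNIV - cdisk i) \<inter> \<Omega> = {}" using cdisk_split[of i] by blast
  have "None \<in> (UNIV - cdisk i) \<inter> \<Omega>" using inf by simp
  then have ne: "(UNIV - cdisk i) \<inter> \<Omega> \<noteq> {}" by blast
  show ?thesis using Om_conn unfolding connectedin
    using disk_open[of i] cdisk_open_compl[of i] sub dj ne by blast
qed

lemma Om_cdisk: assumes i: "i \<in> circ_index \<Omega>" shows "\<Omega> \<inter> cdisk i = {}"
  using Om_disk[OF i] J_front[OF i] front_Om cdisk_split[of i] by blast

lemma cl_disk: assumes i: "i \<in> circ_index \<Omega>" shows "disk i \<inter> sphtop closure_of \<Omega> = {}"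
  using openin_Int_closure_of_eq_empty[OF disk_open[of i]] Om_disk[OF i] by blast

lemma cdisk_disj:
  assumes i: "i \<in> circ_index \<Omega>" and j: "j \<in> circ_index \<Omega>" and ij: "i \<noteq> j"
  shows "cdisk i \<inter> cdisk j = {}"
proof -
  obtain c r c' r' where ci: "i = (c,r)" and cj: "j = (c',r')" by fastforce
  have r: "r > 0" "r' > 0" using J_pos[OF i] J_pos[OF j] ci cj by auto
  have b1: "sphere c' r' \<inter> ball c r = {}"
  proof -
    have "Some ` sphere c' r' \<subseteq> sphtop closure_of \<Omega>" using J_front[OF j] front_cl cj by auto
    then show ?thesis using cl_disk[OF i] ci by (auto simp: disk_def)
  qed
  have b2: "sphere c r \<inter> ball c' r' = {}"
  proof -
    have "Some ` sphere c r \<subseteq> sphtop closure_of \<Omega>" using J_front[OF i] front_cl ci by auto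
    then show ?thesis using cl_disk[OF j] cj by (auto simp: disk_def)
  qed
  have "Some ` sphere c r \<noteq> Some ` sphere c' r'"
  proof
    assume "Some ` sphere c r = Some ` sphere c' r'"
    then have "sphere c r = sphere c' r'" by (simp add: inj_image_eq_iff)
    then have "c = c' \<and> r = r'" using circ_sep(2)[OF r b1 b2] by blast
    then show False using ij ci cj by simp
  qed
  moreover have "Some ` sphere c r \<in> boundary_components \<Omega>" "Some ` sphere c' r' \<in> boundary_components \<Omega>"
    using J_comp[OF i] J_comp[OF j] ci cj by auto
  ultimately have "disjnt (Some ` sphere c r) (Some ` sphere c' r')"
    using connected_components_of_disjoint unfolding boundary_components_def by blast
  then have "sphere c r \<inter> sphere c' r' = {}" by (auto simp: disjnt_def)
  then have "cball c r \<inter> cball c' r' = {}" using circ_sep(1)[OF r b1 b2] by blast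
  then show ?thesis using ci cj by (auto simp: cdisk_def)
qed

end



lemma sing_case:
  fixes C :: "complex set" and x q :: complex
  assumes fx: "frontier C \<subseteq> {x}" and qC: "q \<in> C" and xq: "x \<noteq> q" and Cb: "bounded C"
  shows False
proof -
  have Ec: "connected (- {x})" by (rule connected_complement_bounded_convex) simp_all
  have "q \<in> (- {x}) \<inter> C" using xq qC by simp
  then have ne: "(- {x}) \<inter> C \<noteq> {}" by auto
  have "(- {x}) \<inter> frontier C = {}" using fx by auto
  then have "- {x} - C = {}" using connected_Int_frontier[OF Ec ne] by auto
  then have "- {x} \<subseteq> C" by (simp only: Diff_eq_empty_iff)
  then have "bounded (- {x})" by (rule bounded_subset[OF Cb])
  then have "bounded (insert x (- {x}))" by (simp only: bounded_insert)
  moreover have "insert x (- {x}) = UNIV" by auto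
  ultimately show False by simp
qed

lemma circ_case:
  fixes C :: "complex set"
  assumes fs: "frontier C \<subseteq> sphere c r" and Cb: "bounded C"
  shows "C \<subseteq> cball c r"
proof -
  have Ec: "connected (- cball c r)" by (rule connected_complement_bounded_convex) simp_all
  have "(- cball c r) \<inter> C = {}"
  proof (rule ccontr)
    assume ne: "(- cball c r) \<inter> C \<noteq> {}"
    have "(- cball c r) \<inter> frontier C = {}" using fs by auto
    then have "- cball c r - C = {}" using connected_Int_frontier[OF Ec ne] by auto
    then have "- cball c r \<subseteq> C" by (simp only: Diff_eq_empty_iff)
    then have "bounded (- cball c r)" by (rule bounded_subset[OF Cb])
    then have "bounded (- cball c r \<union> cball c r)" by (simp only: bounded_Un bounded_cball simp_thms)
    moreover have "- cball c r \<union> cball c r = UNIV" by auto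
    ultimately show False by simp
  qed
  then show ?thesis by auto
qed

context
  fixes \<Omega> :: "riemann set"
  assumes cd: "circle_domain \<Omega>" and inf: "None \<in> \<Omega>"
begin

lemmas Om_open' = Om_open[OF cd inf]
lemmas Om_conn' = Om_conn[OF cd inf]
lemmas front_Om' = front_Om[OF cd inf]
lemmas front_cl' = front_cl[OF cd inf]

definition "Om' = {z. Some z \<in> \<Omega>}"

lemma Om'_open: "open Om'"
  using Om_open' unfolding openin_sphtop Om'_def by simp

lemma Om'_R: obtains R where "R \<ge> 0" "\<And>z. R < cmod z \<Longrightarrow> z \<in> Om'"
proof -
  obtain R where "\<forall>z. R < cmod z \<longrightarrow> Some z \<in> \<Omega>" using Om_open' inf unfolding openin_sphtop by blast
  then show ?thesis using that[of "max R 0"] unfolding Om'_def by auto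
qed

lemma Om'_compl_bounded: "bounded (- Om')"
proof -
  obtain R where R: "R \<ge> 0" "\<And>z. R < cmod z \<Longrightarrow> z \<in> Om'" using Om'_R by blast
  have "- Om' \<subseteq> cball 0 R" using R by (force simp: not_less)
  then show ?thesis using bounded_subset bounded_cball by blast
qed

lemma Om'_conn: "connected Om'"
proof -
  obtain R where R: "R \<ge> 0" "\<And>z. R < cmod z \<Longrightarrow> z \<in> Om'" using Om'_R by blast
  define OO0 where "OO0 = - cball (0::complex) R"
  have Oc: "connected OO0" unfolding OO0_def by (rule connected_complement_bounded_convex) auto
  have OO: "OO0 \<subseteq> Om'" unfolding OO0_def using R by auto
  have Oi: "\<And>z. R < cmod z \<Longrightarrow> z \<in> OO0" unfolding OO0_def by auto
  have One: "OO0 \<noteq> {}" using Oi[of "complex_of_real (R+1)"] R(1) by force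
  have key: False if A: "open A" "open B" "Om' \<subseteq> A \<union> B" "A \<inter> B \<inter> Om' = {}" "B \<inter> Om' \<noteq> {}" "OO0 \<subseteq> A" for A B
  proof -
    define E1 where "E1 = insert None (Some ` (A \<inter> Om'))"
    define E2 where "E2 = Some ` (B \<inter> Om')"
    have "{z. Some z \<in> E1} = A \<inter> Om'" unfolding E1_def by auto
    moreover have "\<exists>R. \<forall>z. R < cmod z \<longrightarrow> Some z \<in> E1"
      using Oi OO A(6) unfolding E1_def by blast
    ultimately have o1: "openin sphtop E1" unfolding openin_sphtop using A(1) Om'_open by auto
    have "{z. Some z \<in> E2} = B \<inter> Om'" unfolding E2_def by auto
    then have o2: "openin sphtop E2" unfolding openin_sphtop using A(2) Om'_open by (auto simp: E2_def)
    have "\<Omega> \<subseteq> E1 \<union> E2"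
    proof
      fix p assume "p \<in> \<Omega>"
      then show "p \<in> E1 \<union> E2"
        using A(3) by (cases p) (auto simp: E1_def E2_def Om'_def)
    qed
    moreover have "E1 \<inter> E2 \<inter> \<Omega> = {}" using A(4) by (auto simp: E1_def E2_def)
    moreover have "E1 \<inter> \<Omega> \<noteq> {}" using inf by (auto simp: E1_def)
    moreover have "E2 \<inter> \<Omega> \<noteq> {}" using A(5) by (auto simp: E2_def Om'_def)
    ultimately show False using Om_conn' o1 o2 unfolding connectedin by blast
  qed
  show ?thesis
  proof (rule connectedI)
    fix A B assume A: "open A" "open B" "A \<inter> Om' \<noteq> {}" "B \<inter> Om' \<noteq> {}" "A \<inter> B \<inter> Om' = {}" "Om' \<subseteq> A \<union> B"
    have "A \<inter> OO0 = {} \<or> B \<inter> OO0 = {}"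
      using connectedD[OF Oc A(1) A(2)] A(5) A(6) OO by blast
    then show False
    proof
      assume "A \<inter> OO0 = {}"
      then have "OO0 \<subseteq> B" using OO A(6) by blast
      then show False using key[of B A] A by blast
    next
      assume "B \<inter> OO0 = {}"
      then have "OO0 \<subseteq> A" using OO A(6) by blast
      then show False using key[of A B] A by blast
    qed
  qed
qed


lemma front_Some: "z \<in> frontier Om' \<Longrightarrow> Some z \<in> sphtop frontier_of \<Omega>"
proof -
  assume z: "z \<in> frontier Om'"
  have "z \<in> closure Om'" using z by (simp add: frontier_def)
  then have "Some z \<in> sphtop closure_of \<Omega>" using closure_Some unfolding Om'_def by blast
  moreover have "z \<notin> Om'" using z Om'_open by (simp add: frontier_def interior_open)
  ultimately show ?thesis using Om_open' by (simp add: frontier_of_def interior_of_openin Om'_def)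
qed

lemma compl_cl: assumes p: "p \<notin> sphtop closure_of \<Omega>" shows "\<exists>i \<in> circ_index \<Omega>. p \<in> disk i"
proof -
  have "\<Omega> \<subseteq> sphtop closure_of \<Omega>" by (rule closure_of_subset) simp
  then obtain q where pq: "p = Some q" using p inf by (cases p) auto
  have qn: "q \<notin> closure Om'" using p closure_Some unfolding pq Om'_def by blast
  then have qO: "q \<in> - Om'" using closure_subset by blast
  define C where "C = connected_component_set (- Om') q"
  have Cc: "C \<in> components (- Om')" unfolding C_def using qO by (rule componentsI)
  have fC: "connected (frontier C)" by (rule connected_frontier_component_complement[OF Om'_conn Cc])
  have fCO: "frontier C \<subseteq> frontier Om'"
    using frontier_of_connected_component_subset[of "- Om'" q] unfolding C_def by simp
  have qC: "q \<in> C" unfolding C_def using qO by simp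
  have "C \<subseteq> - Om'" unfolding C_def by (rule connected_component_subset)
  then have Cb: "bounded C" by (rule bounded_subset[OF Om'_compl_bounded])
  have "C \<noteq> UNIV" using Cb by auto
  moreover have "C \<noteq> {}" using qC by blast
  ultimately have "frontier C \<noteq> {}" by (simp add: frontier_not_empty)
  then obtain x where x: "x \<in> frontier C" by blast
  define F where "F = sphtop frontier_of \<Omega>"
  have SF: "Some ` frontier C \<subseteq> F" unfolding F_def using fCO front_Some by blast
  have "connectedin sphtop (Some ` frontier C)"
    using connectedin_continuous_map_image[OF Some_cont] fC by simp
  then have cin: "connectedin (subtopology sphtop F) (Some ` frontier C)"
    using SF by (simp add: connectedin_subtopology)
  define K where "K = connected_component_of_set (subtopology sphtop F) (Some x)"
  have "Some x \<in> topspace (subtopology sphtop F)" using SF x by auto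
  then have "K \<in> connected_components_of (subtopology sphtop F)"
    unfolding K_def by (simp only: connected_component_in_connected_components_of)
  then have KB: "K \<in> boundary_components \<Omega>"
    unfolding boundary_components_def F_def .
  have SK: "Some ` frontier C \<subseteq> K" unfolding K_def
    by (rule connected_component_of_maximal[OF cin]) (use x in blast)
  have KF: "K \<subseteq> F" using comp_front[OF cd inf KB] unfolding F_def .
  have "x \<in> closure Om'" using x fCO by (auto simp: frontier_def)
  then have xq: "x \<noteq> q" using qn by blast
  have ncomp: "\<not> (E \<subseteq> C)" if "\<not> bounded E" for E
  proof
    assume "E \<subseteq> C"
    then have "bounded E" by (rule bounded_subset[OF Cb])
    then show False using that by blast
  qed
  have geo: "geom_circle K \<or> (\<exists>p. K = {p})" using cd KB by (simp add: circle_domain_def)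
  then show ?thesis
  proof
    assume "\<exists>p. K = {p}"
    then obtain p0 where p0: "K = {p0}" by blast
    have "Some x \<in> K" using SK x by blast
    then have "K = {Some x}" using p0 by blast
    have fx: "frontier C \<subseteq> {x}"
    proof
      fix y assume "y \<in> frontier C"
      then have "Some y \<in> K" using SK by blast
      then show "y \<in> {x}" using \<open>K = {Some x}\<close> by simp
    qed
    show ?thesis using sing_case[OF fx qC xq Cb] by (rule FalseE)
  next
    assume "geom_circle K"
    then have "(\<exists>c r. r > 0 \<and> K = Some ` sphere c r) \<or> (\<exists>a b. b \<noteq> 0 \<and> K = insert None (Some ` {a + of_real t * b | t. True}))"
      unfolding geom_circle_def .
    then have "(\<exists>c r. r > 0 \<and> K = Some ` sphere c r) \<or> None \<in> K"
    proof (elim disjE)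
      assume "\<exists>c r. r > 0 \<and> K = Some ` sphere c r"
      then show ?thesis by (rule disjI1)
    next
      assume "\<exists>a b. b \<noteq> 0 \<and> K = insert None (Some ` {a + of_real t * b | t. True})"
      then obtain a b where "K = insert None (Some ` {a + of_real t * b | t. True})" by blast
      then have "None \<in> K" by (rule ssubst) (rule insertI1)
      then show ?thesis by (rule disjI2)
    qed
    moreover have "None \<notin> K" using KF front_Om' inf unfolding F_def by blast
    ultimately obtain c r where circ: "r > 0" "K = Some ` sphere c r" by blast
    have ci: "(c, r) \<in> circ_index \<Omega>" using circ KB by (simp add: circ_index_def)
    have fs: "frontier C \<subseteq> sphere c r"
    proof
      fix y assume "y \<in> frontier C"
      then have "Some y \<in> K" using SK by blast
      then show "y \<in> sphere c r" using circ(2) by auto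
    qed
    have "C \<subseteq> cball c r" by (rule circ_case[OF fs Cb])
    then have "q \<in> cball c r" using qC by (rule subsetD)
    moreover have "q \<notin> sphere c r"
    proof
      assume "q \<in> sphere c r"
      then have "p \<in> K" using circ pq by simp
      then show False using KF p front_cl' unfolding F_def by blast
    qed
    ultimately have "p \<in> disk (c, r)" using pq by (simp add: less_le)
    then show ?thesis using ci by blast
  qed
qed

end



lemma wm_Nil[simp]: "word_map [] = id" by (simp add: word_map_def)
lemma wm_Cons[simp]: "word_map (a # v) = refl a \<circ> word_map v" by (simp add: word_map_def)
lemma wm_snoc: "word_map (v @ [i]) = word_map v \<circ> refl i"
  by (induction v) (auto simp: word_map_def)

lemma red_Cons: "reduced_word J (a # v) \<longleftrightarrow> a \<in> J \<and> reduced_word J v \<and> (v \<noteq> [] \<longrightarrow> a \<noteq> hd v)"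
  by (auto simp: reduced_word_def successively_Cons)

lemma red_Nil[simp]: "reduced_word J []" by (simp add: reduced_word_def)

lemma red_single[simp]: "reduced_word J [i] \<longleftrightarrow> i \<in> J" by (simp add: reduced_word_def)

lemma red_snoc: "reduced_word J (v @ [i]) \<longleftrightarrow> reduced_word J v \<and> i \<in> J \<and> (v \<noteq> [] \<longrightarrow> last v \<noteq> i)"
  by (auto simp: reduced_word_def successively_append_iff)

lemma red_snoc_Cons: "reduced_word J ((a # v) @ [i]) \<longleftrightarrow> a \<in> J \<and> reduced_word J (v @ [i]) \<and> a \<noteq> hd (v @ [i])"
  using red_Cons[of J a "v @ [i]"] by simp

context
  fixes \<Omega> :: "riemann set"
  assumes cd: "circle_domain \<Omega>" and inf: "None \<in> \<Omega>"
begin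

abbreviation "JJ \<equiv> circ_index \<Omega>"

lemma J_pos': "i \<in> JJ \<Longrightarrow> snd i > 0" using J_pos[OF cd inf] by blast

lemma hom_refl: "i \<in> JJ \<Longrightarrow> homeomorphic_map sphtop sphtop (refl i)"
  using refl_homeo[of "snd i" "fst i"] J_pos' by simp

lemma refl_invol': "i \<in> JJ \<Longrightarrow> refl i (refl i p) = p"
  using refl_invol[of "snd i" "fst i"] J_pos' by simp

lemma refl_inj: "i \<in> JJ \<Longrightarrow> inj (refl i)"
  by (metis injI refl_invol')

lemma refl_disk_iff': "i \<in> JJ \<Longrightarrow> p \<in> disk i \<longleftrightarrow> refl i p \<notin> cdisk i"
  using refl_disk_iff[of "snd i" p "fst i"] J_pos' by simp

lemma G1: "i \<in> JJ \<Longrightarrow> X \<inter> disk i = {} \<Longrightarrow> refl i ` X \<subseteq> cdisk i"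
  using refl_disk_iff' by blast

lemma G2: assumes "i \<in> JJ" "X \<inter> cdisk i = {}" shows "refl i ` X \<subseteq> disk i"
proof
  fix y assume "y \<in> refl i ` X"
  then obtain x where x: "x \<in> X" "y = refl i x" by blast
  have "refl i y \<notin> cdisk i" using x assms by (simp add: refl_invol') blast
  then show "y \<in> disk i" using refl_disk_iff' assms(1) by blast
qed

lemma disk_sub: "disk i \<subseteq> cdisk i" by (auto simp: disk_def cdisk_def)

lemma Om_disk': "i \<in> JJ \<Longrightarrow> \<Omega> \<inter> disk i = {}" using Om_disk[OF cd inf] by blast
lemma Om_cdisk': "i \<in> JJ \<Longrightarrow> \<Omega> \<inter> cdisk i = {}" using Om_cdisk[OF cd inf] by blast
lemma cl_disk': "i \<in> JJ \<Longrightarrow> sphtop closure_of \<Omega> \<inter> disk i = {}" using cl_disk[OF cd inf] by blast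
lemma cdisk_disj': "i \<in> JJ \<Longrightarrow> j \<in> JJ \<Longrightarrow> i \<noteq> j \<Longrightarrow> cdisk i \<inter> cdisk j = {}"
  using cdisk_disj[OF cd inf] by blast

lemma refl_Om: "i \<in> JJ \<Longrightarrow> refl i ` \<Omega> \<subseteq> disk i" using G2 Om_cdisk' by blast
lemma refl_cl: "i \<in> JJ \<Longrightarrow> refl i ` (sphtop closure_of \<Omega>) \<subseteq> cdisk i" using G1 cl_disk' by blast
lemma refl_cdisk: "i \<in> JJ \<Longrightarrow> j \<in> JJ \<Longrightarrow> i \<noteq> j \<Longrightarrow> refl i ` cdisk j \<subseteq> disk i"
  using G2 cdisk_disj' by (metis inf_commute)

lemma hom_wm: "set ws \<subseteq> JJ \<Longrightarrow> homeomorphic_map sphtop sphtop (word_map ws)"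
proof (induction ws)
  case Nil then show ?case by (simp only: wm_Nil homeomorphic_map_id)
next
  case (Cons a ws)
  then have "set ws \<subseteq> JJ" "a \<in> JJ" by auto
  then have "homeomorphic_map sphtop sphtop (refl a \<circ> word_map ws)"
    using homeomorphic_map_compose[OF Cons.IH hom_refl] by blast
  then show ?case by (simp only: wm_Cons)
qed

lemma wm_inj: "set ws \<subseteq> JJ \<Longrightarrow> inj (word_map ws)"
  using homeomorphic_imp_injective_map[OF hom_wm] by simp

lemma W_gen:
  assumes Q: "\<And>j. j \<in> JJ \<Longrightarrow> refl j ` X \<subseteq> Q j" "\<And>j. Q j \<subseteq> cdisk j"
  shows "reduced_word JJ (a # v) \<Longrightarrow> word_map (a # v) ` X \<subseteq> Q a \<union> disk a"
proof (induction v arbitrary: a)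
  case Nil
  then show ?case using Q(1)[of a] by (auto simp: red_Cons)
next
  case (Cons b w)
  have a: "a \<in> JJ" "a \<noteq> b" "reduced_word JJ (b # w)" using Cons.prems by (simp_all add: red_Cons)
  have b: "b \<in> JJ" using a(3) by (simp add: red_Cons)
  have "word_map (b # w) ` X \<subseteq> cdisk b" using Cons.IH[OF a(3)] Q(2)[of b] disk_sub[of b] by blast
  then have "refl a ` word_map (b # w) ` X \<subseteq> disk a" using refl_cdisk[OF a(1) b a(2)] by blast
  then have "word_map (a # b # w) ` X \<subseteq> disk a" by (simp only: wm_Cons image_comp)
  then show ?case by blast
qed

lemma W_cl: "reduced_word JJ (a # v) \<Longrightarrow> word_map (a # v) ` (sphtop closure_of \<Omega>) \<subseteq> cdisk a"
  using W_gen[of "sphtop closure_of \<Omega>" cdisk, OF refl_cl] disk_sub by blast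

lemma W_Om: "reduced_word JJ (a # v) \<Longrightarrow> word_map (a # v) ` \<Omega> \<subseteq> disk a"
  using W_gen[of \<Omega> disk, OF refl_Om disk_sub] by blast

lemma V_lem: "reduced_word JJ ((a # v) @ [i]) \<Longrightarrow> word_map (a # v) ` cdisk i \<subseteq> disk a"
proof (induction v arbitrary: a)
  case Nil
  then have "a \<in> JJ" "i \<in> JJ" "a \<noteq> i" by (simp_all add: red_Cons)
  then show ?case using refl_cdisk by simp
next
  case (Cons b w)
  have a: "a \<in> JJ" "a \<noteq> b" "reduced_word JJ ((b # w) @ [i])" using Cons.prems by (simp_all add: red_Cons)
  have b: "b \<in> JJ" using a(3) by (simp add: red_Cons)
  have "word_map (b # w) ` cdisk i \<subseteq> cdisk b" using Cons.IH[OF a(3)] disk_sub[of b] by blast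
  then have "refl a ` word_map (b # w) ` cdisk i \<subseteq> disk a" using refl_cdisk[OF a(1) b a(2)] by blast
  then show ?case by (simp add: image_comp)
qed

lemma V_disk: "reduced_word JJ ((a # v) @ [i]) \<Longrightarrow> word_map (a # v) ` disk i \<subseteq> disk a"
  using V_lem disk_sub by (meson image_mono order_trans)

end



lemma wm_Cons_img: "word_map (a # v) ` X = refl a ` (word_map v ` X)"
  by (simp add: image_comp)

context
  fixes \<Omega> :: "riemann set"
  assumes cd: "circle_domain \<Omega>" and inf: "None \<in> \<Omega>"
begin

abbreviation "JJ' \<equiv> circ_index \<Omega>"
abbreviation "CL \<equiv> sphtop closure_of \<Omega>"

lemmas V_disk' = V_disk[OF cd inf]
lemmas W_Om' = W_Om[OF cd inf]
lemmas W_cl' = W_cl[OF cd inf]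
lemmas refl_inj' = refl_inj[OF cd inf]
lemmas cdisk_disj'' = cdisk_disj'[OF cd inf]
lemmas Om_disk'' = Om_disk'[OF cd inf]
lemmas Om_cdisk'' = Om_cdisk'[OF cd inf]
lemmas cl_disk'' = cl_disk'[OF cd inf]
lemmas disk_sub' = disk_sub[OF cd inf]

lemma disk_disj: "i \<in> JJ' \<Longrightarrow> j \<in> JJ' \<Longrightarrow> i \<noteq> j \<Longrightarrow> disk i \<inter> disk j = {}"
  using cdisk_disj'' disk_sub'[of i] disk_sub'[of j] by blast

lemma refl_Int: "a \<in> JJ' \<Longrightarrow> refl a ` A \<inter> refl a ` B = refl a ` (A \<inter> B)"
  using refl_inj' by (simp add: image_Int)

lemma DT: "reduced_word JJ' T \<Longrightarrow> reduced_word JJ' (w @ [i]) \<Longrightarrow> length T \<le> length w \<Longrightarrow>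
   word_map w ` disk i \<inter> word_map T ` \<Omega> = {}"
proof (induction T arbitrary: w)
  case Nil
  show ?case
  proof (cases w)
    case Nil
    then have "i \<in> JJ'" using Nil.prems by (simp add: red_snoc)
    then show ?thesis using Nil Om_disk''[of i] by auto
  next
    case (Cons b w')
    then have "word_map w ` disk i \<subseteq> disk b" "b \<in> JJ'" using V_disk' Nil.prems by (auto simp: red_Cons)
    then show ?thesis using Om_disk''[of b] by auto
  qed
next
  case (Cons a t)
  then obtain b w' where w: "w = b # w'" by (cases w) auto
  have rw: "b \<in> JJ'" "reduced_word JJ' (w' @ [i])" using Cons.prems w by (simp_all add: red_Cons)
  have rt: "a \<in> JJ'" "reduced_word JJ' t" using Cons.prems by (simp_all add: red_Cons)
  show ?case
  proof (cases "a = b")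
    case True
    have "word_map w ` disk i \<inter> word_map (a # t) ` \<Omega> = refl a ` (word_map w' ` disk i \<inter> word_map t ` \<Omega>)"
      using w True refl_Int[OF rt(1)] by (simp only: wm_Cons_img)
    also have "\<dots> = {}" using Cons.IH[OF rt(2) rw(2)] Cons.prems w by simp
    finally show ?thesis .
  next
    case False
    have "word_map w ` disk i \<subseteq> disk b" using V_disk' Cons.prems w by blast
    moreover have "word_map (a # t) ` \<Omega> \<subseteq> disk a" using W_Om' Cons.prems by blast
    ultimately show ?thesis using disk_disj[OF rt(1) rw(1) False] by blast
  qed
qed

lemma CLT: "reduced_word JJ' T \<Longrightarrow> reduced_word JJ' T' \<Longrightarrow> T \<noteq> T' \<Longrightarrow>
   word_map T ` CL \<inter> word_map T' ` \<Omega> = {}"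
proof (induction T arbitrary: T')
  case Nil
  then obtain b t' where T': "T' = b # t'" by (cases T') auto
  then have "word_map T' ` \<Omega> \<subseteq> disk b" "b \<in> JJ'" using W_Om' Nil.prems by (auto simp: red_Cons)
  then show ?case using cl_disk''[of b] by auto
next
  case (Cons a t)
  have rt: "a \<in> JJ'" "reduced_word JJ' t" using Cons.prems by (simp_all add: red_Cons)
  have c1: "word_map (a # t) ` CL \<subseteq> cdisk a" using W_cl' Cons.prems by blast
  show ?case
  proof (cases T')
    case Nil
    then show ?thesis using c1 Om_cdisk''[OF rt(1)] by auto
  next
    case (Cons b t')
    have rb: "b \<in> JJ'" "reduced_word JJ' t'" using Cons Cons.prems(2) by (simp_all add: red_Cons)
    show ?thesis
    proof (cases "a = b")
      case True
      then have "t \<noteq> t'" using Cons.prems(3) Cons by simp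
      have "word_map (a # t) ` CL \<inter> word_map T' ` \<Omega> = refl a ` (word_map t ` CL \<inter> word_map t' ` \<Omega>)"
        using Cons True refl_Int[OF rt(1)] by (simp only: wm_Cons_img)
      also have "\<dots> = {}" using Cons.IH[OF rt(2) rb(2) \<open>t \<noteq> t'\<close>] by simp
      finally show ?thesis .
    next
      case False
      have "word_map T' ` \<Omega> \<subseteq> disk b" using W_Om' Cons.prems(2) Cons by blast
      then show ?thesis using c1 cdisk_disj''[OF rt(1) rb(1) False] disk_sub'[of b] by blast
    qed
  qed
qed

lemma DJ: "reduced_word JJ' (ws @ [i]) \<Longrightarrow> reduced_word JJ' (ws' @ [i']) \<Longrightarrow> length ws = length ws' \<Longrightarrow>
   ws @ [i] \<noteq> ws' @ [i'] \<Longrightarrow> word_map ws ` disk i \<inter> word_map ws' ` disk i' = {}"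
proof (induction ws arbitrary: ws')
  case Nil
  then have "ws' = []" by simp
  then show ?case using Nil.prems disk_disj by (auto simp: red_snoc)
next
  case (Cons a v)
  then obtain b v' where w': "ws' = b # v'" by (cases ws') auto
  have ra: "a \<in> JJ'" "reduced_word JJ' (v @ [i])" using Cons.prems by (simp_all add: red_Cons)
  have rb: "b \<in> JJ'" "reduced_word JJ' (v' @ [i'])" using Cons.prems w' by (simp_all add: red_Cons)
  show ?case
  proof (cases "a = b")
    case True
    then have ne: "v @ [i] \<noteq> v' @ [i']" using Cons.prems(4) w' by simp
    have "word_map (a # v) ` disk i \<inter> word_map ws' ` disk i' = refl a ` (word_map v ` disk i \<inter> word_map v' ` disk i')"
      using w' True refl_Int[OF ra(1)] by (simp only: wm_Cons_img)
    also have "\<dots> = {}" using Cons.IH[OF ra(2) rb(2) _ ne] Cons.prems(3) w' by simp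
    finally show ?thesis .
  next
    case False
    have "word_map (a # v) ` disk i \<subseteq> disk a" using V_disk' Cons.prems(1) by blast
    moreover have "word_map ws' ` disk i' \<subseteq> disk b" using V_disk' Cons.prems(2) w' by blast
    ultimately show ?thesis using disk_disj[OF ra(1) rb(1) False] by blast
  qed
qed

end



context
  fixes \<Omega> :: "riemann set"
  assumes cd: "circle_domain \<Omega>" and inf: "None \<in> \<Omega>"
begin

abbreviation "JI \<equiv> circ_index \<Omega>"
abbreviation "CLI \<equiv> sphtop closure_of \<Omega>"

definition "Ufn k = \<Union>{word_map ws ` CLI | ws. reduced_word JI ws \<and> length ws \<le> k}"
definition "Dfn k = \<Union>{word_map ws ` disk i | ws i. reduced_word JI (ws @ [i]) \<and> length ws = k}"

lemmas hom_wm' = hom_wm[OF cd inf]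
lemmas DT' = DT[OF cd inf]
lemmas CLT' = CLT[OF cd inf]
lemmas DJ' = DJ[OF cd inf]
lemmas compl_cl' = compl_cl[OF cd inf]
lemmas wm_inj' = wm_inj[OF cd inf]

lemma red_set: "reduced_word J ws \<Longrightarrow> set ws \<subseteq> J" by (simp add: reduced_word_def)

lemma red_prefix: "reduced_word J (ws @ [i]) \<Longrightarrow> reduced_word J ws" by (simp add: red_snoc)

lemma OK_open: "openin sphtop (Omega_k \<Omega> k)"
  unfolding Omega_k_def
proof (rule openin_Union, clarify)
  fix ws assume "reduced_word JI ws" "length ws \<le> k"
  then have hw: "homeomorphic_map sphtop sphtop (word_map ws)" using hom_wm' red_set by blast
  show "openin sphtop (word_map ws ` \<Omega>)"
    using homeomorphic_map_openness[OF hw, of \<Omega>] Om_open[OF cd inf] by simp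
qed

lemma D_open: "openin sphtop (Dfn k)"
  unfolding Dfn_def
proof (rule openin_Union)
  fix X assume "X \<in> {word_map ws ` disk i | ws i. reduced_word JI (ws @ [i]) \<and> length ws = k}"
  then obtain ws i where X: "X = word_map ws ` disk i" "reduced_word JI (ws @ [i])" by blast
  then have "reduced_word JI ws" by (simp add: red_snoc)
  then have hw: "homeomorphic_map sphtop sphtop (word_map ws)" using hom_wm' red_set by blast
  show "openin sphtop X"
    using homeomorphic_map_openness[OF hw, of "disk i"] disk_open X(1) by simp
qed

lemma D_OK: "Dfn k \<inter> Omega_k \<Omega> k = {}"
  unfolding Dfn_def Omega_k_def using DT' by fastforce

lemma Ufn_mono: "k \<le> m \<Longrightarrow> Ufn k \<subseteq> Ufn m"
  unfolding Ufn_def by fastforce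

lemma compl_D: "UNIV - Dfn k \<subseteq> Ufn k"
proof (induction k)
  case 0
  show ?case
  proof
    fix p assume p: "p \<in> UNIV - Dfn 0"
    have "p \<in> CLI"
    proof (rule ccontr)
      assume "p \<notin> CLI"
      then obtain i where "i \<in> JI" "p \<in> disk i" using compl_cl' by blast
      then have "p \<in> word_map [] ` disk i" "reduced_word JI ([] @ [i])" "length ([]::(complex\<times>real) list) = 0" by simp_all
      then have "p \<in> Dfn 0" unfolding Dfn_def by blast
      then show False using p by blast
    qed
    then have "p \<in> word_map [] ` CLI" "reduced_word JI []" "length ([]::(complex\<times>real) list) \<le> 0" by simp_all
    then show "p \<in> Ufn 0" unfolding Ufn_def by blast
  qed
next
  case (Suc k)
  show ?case
  proof
    fix p assume p: "p \<in> UNIV - Dfn (Suc k)"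
    show "p \<in> Ufn (Suc k)"
    proof (cases "p \<in> Dfn k")
      case False
      then show ?thesis using Suc.IH Ufn_mono[of k "Suc k"] by auto
    next
      case True
      then obtain w i where wi: "reduced_word JI (w @ [i])" "length w = k" "p \<in> word_map w ` disk i"
        unfolding Dfn_def by blast
      then obtain q where q: "q \<in> disk i" "p = word_map w q" by blast
      have iJ: "i \<in> JI" using wi(1) by (simp add: red_snoc)
      define s where "s = refl i q"
      have qs: "q = refl i s" unfolding s_def using refl_invol'[OF cd inf iJ] by simp
      have sc: "s \<notin> cdisk i" unfolding s_def using refl_disk_iff'[OF cd inf iJ] q(1) by blast
      have ps: "p = word_map (w @ [i]) s" using q(2) qs by (simp add: wm_snoc)
      show ?thesis
      proof (cases "s \<in> CLI")
        case True
        then have "p \<in> word_map (w @ [i]) ` CLI" using ps by blast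
        moreover have "length (w @ [i]) \<le> Suc k" using wi(2) by simp
        ultimately show ?thesis unfolding Ufn_def using wi(1) by blast
      next
        case False
        then obtain j where j: "j \<in> JI" "s \<in> disk j" using compl_cl' by blast
        have "i \<noteq> j" using j(2) sc disk_sub[OF cd inf, of j] by blast
        then have "reduced_word JI ((w @ [i]) @ [j])" using wi(1) j(1) red_snoc[of JI "w @ [i]" j] by simp
        moreover have "p \<in> word_map (w @ [i]) ` disk j" using ps j(2) by blast
        moreover have "length (w @ [i]) = Suc k" using wi(2) by simp
        ultimately have "p \<in> Dfn (Suc k)" unfolding Dfn_def by blast
        then show ?thesis using p by blast
      qed
    qed
  qed
qed

lemma U_cl: "Ufn k \<subseteq> sphtop closure_of (Omega_k \<Omega> k)"
  unfolding Ufn_def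
proof (rule Union_least)
  fix X assume "X \<in> {word_map ws ` CLI | ws. reduced_word JI ws \<and> length ws \<le> k}"
  then obtain ws where ws: "reduced_word JI ws" "length ws \<le> k" and X: "X = word_map ws ` CLI" by blast
  have hw: "homeomorphic_map sphtop sphtop (word_map ws)" using hom_wm' red_set ws(1) by blast
  have "word_map ws ` CLI = sphtop closure_of (word_map ws ` \<Omega>)"
    using homeomorphic_map_closure_of[OF hw, of \<Omega>] by simp
  also have "\<dots> \<subseteq> sphtop closure_of (Omega_k \<Omega> k)"
    by (rule closure_of_mono) (use ws in \<open>auto simp: Omega_k_def\<close>)
  finally show "X \<subseteq> sphtop closure_of (Omega_k \<Omega> k)" using X by simp
qed

lemma cl_D: "sphtop closure_of (Omega_k \<Omega> k) \<subseteq> UNIV - Dfn k"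
proof (rule closure_of_minimal)
  show "Omega_k \<Omega> k \<subseteq> UNIV - Dfn k" using D_OK by blast
  have "UNIV - (UNIV - Dfn k) = Dfn k" by blast
  then show "closedin sphtop (UNIV - Dfn k)" using D_open by (simp add: closedin_def)
qed

lemma cl_eq: "sphtop closure_of (Omega_k \<Omega> k) = Ufn k"
  using U_cl cl_D compl_D by blast

lemma compl_eq: "UNIV - sphtop closure_of (Omega_k \<Omega> k) = Dfn k"
  using U_cl cl_D compl_D by blast

lemma front_eq: "sphtop frontier_of (Omega_k \<Omega> k) =
   \<Union>{word_map ws ` (sphtop frontier_of \<Omega>) | ws. reduced_word JI ws \<and> length ws \<le> k}"
proof -
  have fO: "sphtop frontier_of \<Omega> = CLI - \<Omega>"
    using Om_open[OF cd inf] by (simp add: frontier_of_def interior_of_openin)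
  have fK: "sphtop frontier_of (Omega_k \<Omega> k) = Ufn k - Omega_k \<Omega> k"
    using OK_open cl_eq by (simp add: frontier_of_def interior_of_openin)
  show ?thesis
  proof (rule set_eqI, rule iffI)
    fix x assume "x \<in> sphtop frontier_of (Omega_k \<Omega> k)"
    then have x: "x \<in> Ufn k" "x \<notin> Omega_k \<Omega> k" using fK by auto
    then obtain ws y where ws: "reduced_word JI ws" "length ws \<le> k" "y \<in> CLI" "x = word_map ws y"
      unfolding Ufn_def by blast
    have "y \<notin> \<Omega>"
    proof
      assume "y \<in> \<Omega>"
      then have "x \<in> Omega_k \<Omega> k" using ws unfolding Omega_k_def by blast
      then show False using x(2) by blast
    qed
    then have "x \<in> word_map ws ` (sphtop frontier_of \<Omega>)" using ws fO by blast
    then show "x \<in> \<Union>{word_map ws ` (sphtop frontier_of \<Omega>) | ws. reduced_word JI ws \<and> length ws \<le> k}"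
      using ws by blast
  next
    fix x assume "x \<in> \<Union>{word_map ws ` (sphtop frontier_of \<Omega>) | ws. reduced_word JI ws \<and> length ws \<le> k}"
    then obtain ws y where ws: "reduced_word JI ws" "length ws \<le> k" "y \<in> CLI" "y \<notin> \<Omega>" "x = word_map ws y"
      using fO by blast
    have "x \<in> Ufn k" unfolding Ufn_def using ws by blast
    moreover have "x \<notin> Omega_k \<Omega> k"
    proof
      assume "x \<in> Omega_k \<Omega> k"
      then obtain T z where T: "reduced_word JI T" "z \<in> \<Omega>" "x = word_map T z"
        unfolding Omega_k_def by blast
      show False
      proof (cases "T = ws")
        case True
        then have "z = y" using T ws wm_inj'[OF red_set[OF ws(1)]] by (auto dest: injD)
        then show False using T ws by blast
      next
        case False
        have "word_map ws ` CLI \<inter> word_map T ` \<Omega> = {}" using CLT'[OF ws(1) T(1)] False by auto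
        then show False using T ws by blast
      qed
    qed
    ultimately show "x \<in> sphtop frontier_of (Omega_k \<Omega> k)" using fK by blast
  qed
qed

lemma claim5: assumes r: "reduced_word JI (ws @ [i, j])"
  shows "sphtop closure_of (word_map (ws @ [i]) ` disk j) \<subseteq> word_map ws ` disk i"
proof -
  have r1: "reduced_word JI ((ws @ [i]) @ [j])" using r by (simp only: append_assoc append_Cons append_Nil)
  have "reduced_word JI (ws @ [i]) \<and> j \<in> JI \<and> (ws @ [i] \<noteq> [] \<longrightarrow> last (ws @ [i]) \<noteq> j)"
    using red_snoc[THEN iffD1, OF r1] .
  then have rw: "reduced_word JI (ws @ [i])" and jJ: "j \<in> JI" and ij: "i \<noteq> j" by auto
  have iJ: "i \<in> JI" using rw by (simp add: red_snoc)
  have rws: "reduced_word JI ws" using rw by (simp add: red_snoc)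
  have hw: "homeomorphic_map sphtop sphtop (word_map ws)" using hom_wm' red_set rws by blast
  have hi: "homeomorphic_map sphtop sphtop (refl i)" using hom_refl[OF cd inf iJ] .
  have "word_map (ws @ [i]) ` disk j = word_map ws ` (refl i ` disk j)" by (simp add: wm_snoc image_comp)
  then have "sphtop closure_of (word_map (ws @ [i]) ` disk j) = word_map ws ` (sphtop closure_of (refl i ` disk j))"
    using homeomorphic_map_closure_of[OF hw, of "refl i ` disk j"] by simp
  also have "\<dots> \<subseteq> word_map ws ` (refl i ` cdisk j)"
  proof (rule image_mono, rule closure_of_minimal)
    show "refl i ` disk j \<subseteq> refl i ` cdisk j" using disk_sub[OF cd inf] by (rule image_mono)
    show "closedin sphtop (refl i ` cdisk j)"
      using homeomorphic_map_closedness[OF hi, of "cdisk j"] cdisk_closed by simp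
  qed
  also have "\<dots> \<subseteq> word_map ws ` disk i"
    using refl_cdisk[OF cd inf iJ jJ ij] by (rule image_mono)
  finally show ?thesis .
qed

end

theorem lemma7p2:
  fixes \<Omega> :: "riemann set" and k :: nat
  assumes "circle_domain \<Omega>" and "None \<in> \<Omega>"
  defines "J \<equiv> circ_index \<Omega>"
  shows "sphtop closure_of (Omega_k \<Omega> k) =
           \<Union>{word_map ws ` (sphtop closure_of \<Omega>) | ws. reduced_word J ws \<and> length ws \<le> k}
    \<and> sphtop frontier_of (Omega_k \<Omega> k) =
           \<Union>{word_map ws ` (sphtop frontier_of \<Omega>) | ws. reduced_word J ws \<and> length ws \<le> k}
    \<and> UNIV - sphtop closure_of (Omega_k \<Omega> k) =
           \<Union>{word_map ws ` disk i | ws i. reduced_word J (ws @ [i]) \<and> length ws = k}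
    \<and> (\<forall>ws i ws' i'. reduced_word J (ws @ [i]) \<longrightarrow> reduced_word J (ws' @ [i']) \<longrightarrow>
           length ws = k \<longrightarrow> length ws' = k \<longrightarrow> ws @ [i] \<noteq> ws' @ [i'] \<longrightarrow>
           word_map ws ` disk i \<inter> word_map ws' ` disk i' = {})
    \<and> (\<forall>ws i j. reduced_word J (ws @ [i, j]) \<longrightarrow> length ws = k \<longrightarrow>
           sphtop closure_of (word_map (ws @ [i]) ` disk j) \<subseteq> word_map ws ` disk i)"
  unfolding J_def
  using cl_eq[OF assms(1,2), of k, unfolded Ufn_def[OF assms(1,2)]]
    front_eq[OF assms(1,2), of k]
    compl_eq[OF assms(1,2), of k, unfolded Dfn_def[OF assms(1,2)]]
    DJ'[OF assms(1,2)] claim5[OF assms(1,2)]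
  by auto


end
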